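(* Let $\varphi,\psi$ be non-negative locally finite Borel measures on $\mathbb R^d$ and let $f$ be a stable constrained density for $(\varphi,\psi)$. Let $X'$ be the set of unexhausted sites and $\Xi'$ the set of unsated centers. If $X'\neq\emptyset$ then $\psi(\Xi')<1$, and if $\Xi'\neq\emptyset$ then $\varphi(X')<1$. In particular, $\varphi(X')<1$ or $\psi(\Xi')<1$.
   Context: A non-negative measurable $f$ on $\mathbb R^d\times\mathbb R^d$ is a constrained density for $(\varphi,\psi)$ if $\int f(x,\xi)\psi(d\xi)\le1$ for all $x$, $\int f(x,\xi)\varphi(dx)\le 1$ for all $\xi$, and $f\le1$ everywhere. A site $x_0$ is exhausted if $\int f(x_0,\xi)\psi(d\xi)=1$ and unexhausted otherwise; a center $\xi_0$ is sated if $\int f(x,\xi_0)\varphi(dx)=1$ and unsated otherwise. $x_0$ desires $\xi_0$ if $f(x_0,\xi_0)<1$ and either $x_0$ is unexhausted or there is $\xi_1$ with $|x_0-\xi_1|>|x_0-\xi_0|$ and $f(x_0,\xi_1)>0$. $\xi_0$ desires $x_0$ if $f(x_0,\xi_0)<1$ and either $\xi_0$ is unsated or there is $x_1$ with $|x_1-\xi_0|>|x_0-\xi_0|$ and $f(x_1,\xi_0)>0$. $f$ is stable if no pair $(x_0,\xi_0)$ exists with $x_0$ desiring $\xi_0$ and $\xi_0$ desiring $x_0$. *)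

theory Defs
  imports "HOL-Analysis.Analysis"
begin

definition locally_finite_borel :: "'a::euclidean_space measure \<Rightarrow> bool" where
  "locally_finite_borel M \<longleftrightarrow> sets M = sets borel \<and>
     (\<forall>K. compact K \<longrightarrow> emeasure M K < \<infinity>)"

definition site_mass :: "'a measure \<Rightarrow> ('a \<Rightarrow> 'a \<Rightarrow> real) \<Rightarrow> 'a \<Rightarrow> ennreal" where
  "site_mass \<psi> f x = (\<integral>\<^sup>+ \<xi>. ennreal (f x \<xi>) \<partial>\<psi>)"

definition center_mass :: "'a measure \<Rightarrow> ('a \<Rightarrow> 'a \<Rightarrow> real) \<Rightarrow> 'a \<Rightarrow> ennreal" where
  "center_mass \<phi> f \<xi> = (\<integral>\<^sup>+ x. ennreal (f x \<xi>) \<partial>\<phi>)"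

definition constrained_density ::
  "'a::euclidean_space measure \<Rightarrow> 'a measure \<Rightarrow> ('a \<Rightarrow> 'a \<Rightarrow> real) \<Rightarrow> bool" where
  "constrained_density \<phi> \<psi> f \<longleftrightarrow>
     (\<lambda>(x, \<xi>). f x \<xi>) \<in> borel_measurable borel \<and>
     (\<forall>x \<xi>. 0 \<le> f x \<xi> \<and> f x \<xi> \<le> 1) \<and>
     (\<forall>x. site_mass \<psi> f x \<le> 1) \<and>
     (\<forall>\<xi>. center_mass \<phi> f \<xi> \<le> 1)"

definition exhausted :: "'a measure \<Rightarrow> ('a \<Rightarrow> 'a \<Rightarrow> real) \<Rightarrow> 'a \<Rightarrow> bool" where
  "exhausted \<psi> f x \<longleftrightarrow> site_mass \<psi> f x = 1"

definition sated :: "'a measure \<Rightarrow> ('a \<Rightarrow> 'a \<Rightarrow> real) \<Rightarrow> 'a \<Rightarrow> bool" where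
  "sated \<phi> f \<xi> \<longleftrightarrow> center_mass \<phi> f \<xi> = 1"

definition site_desires ::
  "'a::euclidean_space measure \<Rightarrow> ('a \<Rightarrow> 'a \<Rightarrow> real) \<Rightarrow> 'a \<Rightarrow> 'a \<Rightarrow> bool" where
  "site_desires \<psi> f x0 \<xi>0 \<longleftrightarrow> f x0 \<xi>0 < 1 \<and>
     (\<not> exhausted \<psi> f x0 \<or> (\<exists>\<xi>1. dist x0 \<xi>1 > dist x0 \<xi>0 \<and> f x0 \<xi>1 > 0))"

definition center_desires ::
  "'a::euclidean_space measure \<Rightarrow> ('a \<Rightarrow> 'a \<Rightarrow> real) \<Rightarrow> 'a \<Rightarrow> 'a \<Rightarrow> bool" where
  "center_desires \<phi> f \<xi>0 x0 \<longleftrightarrow> f x0 \<xi>0 < 1 \<and>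
     (\<not> sated \<phi> f \<xi>0 \<or> (\<exists>x1. dist x1 \<xi>0 > dist x0 \<xi>0 \<and> f x1 \<xi>0 > 0))"

definition stable ::
  "'a::euclidean_space measure \<Rightarrow> 'a measure \<Rightarrow> ('a \<Rightarrow> 'a \<Rightarrow> real) \<Rightarrow> bool" where
  "stable \<phi> \<psi> f \<longleftrightarrow>
     \<not> (\<exists>x0 \<xi>0. site_desires \<psi> f x0 \<xi>0 \<and> center_desires \<phi> f \<xi>0 x0)"

end

theory Submission
  imports Defs
begin

lemma key:
  fixes \<phi> \<psi> :: "'a::euclidean_space measure" and f :: "'a \<Rightarrow> 'a \<Rightarrow> real"
  assumes cd: "constrained_density \<phi> \<psi> f" and st: "stable \<phi> \<psi> f"
    and x0: "\<not> exhausted \<psi> f x0"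
  shows "emeasure \<psi> {\<xi>. \<not> sated \<phi> f \<xi>} < 1"
proof (cases "{\<xi>. \<not> sated \<phi> f \<xi>} \<in> sets \<psi>")
  case False
  then show ?thesis by (simp add: emeasure_notin_sets)
next
  case True
  let ?S = "{\<xi>. \<not> sated \<phi> f \<xi>}"
  have one: "f x0 \<xi> = 1" if "\<xi> \<in> ?S" for \<xi>
  proof (rule ccontr)
    assume "f x0 \<xi> \<noteq> 1"
    with cd have "f x0 \<xi> < 1" unfolding constrained_density_def by (metis order_less_le)
    with x0 that st show False
      unfolding stable_def site_desires_def center_desires_def by auto
  qed
  have "emeasure \<psi> ?S = (\<integral>\<^sup>+ \<xi>. indicator ?S \<xi> \<partial>\<psi>)"
    using True by simp
  also have "\<dots> \<le> (\<integral>\<^sup>+ \<xi>. ennreal (f x0 \<xi>) \<partial>\<psi>)"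
    by (rule nn_integral_mono) (auto simp: indicator_def one)
  also have "\<dots> < 1"
    using x0 cd unfolding exhausted_def constrained_density_def site_mass_def
    by (metis order_less_le)
  finally show ?thesis .
qed

lemma key2:
  fixes \<phi> \<psi> :: "'a::euclidean_space measure" and f :: "'a \<Rightarrow> 'a \<Rightarrow> real"
  assumes cd: "constrained_density \<phi> \<psi> f" and st: "stable \<phi> \<psi> f"
    and x0: "\<not> sated \<phi> f \<xi>0"
  shows "emeasure \<phi> {x. \<not> exhausted \<psi> f x} < 1"
proof (cases "{x. \<not> exhausted \<psi> f x} \<in> sets \<phi>")
  case False
  then show ?thesis by (simp add: emeasure_notin_sets)
next
  case True
  let ?S = "{x. \<not> exhausted \<psi> f x}"
  have one: "f x \<xi>0 = 1" if "x \<in> ?S" for x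
  proof (rule ccontr)
    assume "f x \<xi>0 \<noteq> 1"
    with cd have "f x \<xi>0 < 1" unfolding constrained_density_def by (metis order_less_le)
    with x0 that st show False
      unfolding stable_def site_desires_def center_desires_def by auto
  qed
  have "emeasure \<phi> ?S = (\<integral>\<^sup>+ x. indicator ?S x \<partial>\<phi>)"
    using True by simp
  also have "\<dots> \<le> (\<integral>\<^sup>+ x. ennreal (f x \<xi>0) \<partial>\<phi>)"
    by (rule nn_integral_mono) (auto simp: indicator_def one)
  also have "\<dots> < 1"
    using x0 cd unfolding sated_def constrained_density_def center_mass_def
    by (metis order_less_le)
  finally show ?thesis .
qed

theorem mainTheorem6:
  fixes \<phi> \<psi> :: "'a::euclidean_space measure" and f :: "'a \<Rightarrow> 'a \<Rightarrow> real"
  assumes "locally_finite_borel \<phi>" and "locally_finite_borel \<psi>"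
    and "constrained_density \<phi> \<psi> f" and "stable \<phi> \<psi> f"
  defines "X' \<equiv> {x. \<not> exhausted \<psi> f x}" and "\<Xi>' \<equiv> {\<xi>. \<not> sated \<phi> f \<xi>}"
  shows "(X' \<noteq> {} \<longrightarrow> emeasure \<psi> \<Xi>' < 1) \<and> (\<Xi>' \<noteq> {} \<longrightarrow> emeasure \<phi> X' < 1)
         \<and> (emeasure \<phi> X' < 1 \<or> emeasure \<psi> \<Xi>' < 1)"
proof -
  have A: "X' \<noteq> {} \<longrightarrow> emeasure \<psi> \<Xi>' < 1"
    using key[OF assms(3,4)] unfolding X'_def \<Xi>'_def by blast
  have B: "\<Xi>' \<noteq> {} \<longrightarrow> emeasure \<phi> X' < 1"
    using key2[OF assms(3,4)] unfolding X'_def \<Xi>'_def by blast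
  have C: "emeasure \<phi> X' < 1 \<or> emeasure \<psi> \<Xi>' < 1"
  proof (cases "X' = {}")
    case True then show ?thesis by simp
  next
    case False then show ?thesis using A by blast
  qed
  show ?thesis using A B C by blast
qed

end
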